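(* Let $k\ge3$, let $\{S_n\}$ be a perturbed sequence of weak shifts of degree $d$ corresponding to a uniformly bounded sequence of weak shift-like maps $\{\mathsf S_n\}$ of degree $\tilde d\le d-2$. Then there exists a sufficiently large $R>1$ such that \[U^+=\bigcup_{n\ge1} S(n)^{-1}\bigl(\operatorname{int} V_R^k\bigr)\quad\text{and}\quad U^-=\bigcup_{n\ge1}\bigl(S^{-1}(n)\bigr)^{-1}\bigl(\operatorname{int} V_R^-\bigr).\]
   Context: Let $Q_m(z)=z^m$ and $\mathbf H_d(w_1,\dots,w_{k-1})=\sum_{i=1}^{k-1}w_i^d$. A sequence $\{\mathsf S_n\}$ of maps $\mathsf S_n(z_1,\dots,z_k)=(z_2,\dots,z_k,\ a_nz_1+p_n(z_2,\dots,z_k))$ is a uniformly bounded sequence of weak shift-like maps of degree $\tilde d\ge1$ if each $a_nz_1+p_n$ has degree $\tilde d$, $p_n(\mathbf z)=\sum_{i\in I}\alpha_{i,n}\mathbf z^i$ with $I$ the multi-indices in $\mathbb{N}_0^{k-1}$ of total degree $\le\tilde d$, and there are constants $\tilde m,\tilde M>0$ with $\tilde m<|a_n|<\tilde M$ and $|\alpha_{i,n}|<\tilde M$ for all $n,i$. For $d\ge\tilde d+2$ the associated perturbed sequence of weak shifts of degree $d$ is \[S_n(z)=\mathsf S_n(z)+\bigl(0,\dots,0,Q_{d-1}(z_2),\mathbf H_d(z_2,\dots,z_k)\bigr),\] i.e. $S_n(z)=(z_2,\dots,z_{k-1},z_k+z_2^{d-1},a_nz_1+p_n(z_2,\dots,z_k)+\sum_{i=2}^k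 z_i^d)$; these are polynomial automorphisms of $\mathbb{C}^k$. Write $S(n)=S_n\circ\cdots\circ S_1$ and $S^{-1}(n)=S_n^{-1}\circ\cdots\circ S_1^{-1}$, and $\overline{F}$ for the extension of a polynomial map to $\mathbb{P}^k$, with $z\in\mathbb{C}^k$ identified with $[z:1]$. Let $X^+=[0:\cdots:0:1:0]$ (the $k$-th homogeneous coordinate equal to 1) and $X^-=[1:0:\cdots:0]$. Define $U^+=\{z\in\mathbb{C}^k:\overline{S(n)}([z:1])\to X^+\}$ and $U^-=\{z\in\mathbb{C}^k:\overline{S^{-1}(n)}([z:1])\to X^-\}$. For $R>0$, $V_R^k=\{z:|z_k|\ge\max\{(k-1)|z_1|,\dots,(k-1)|z_{k-1}|,R\}\}$ and $V_R^-=\{z:|z_1|\ge\max\{(k-1)|z_2|,\dots,(k-1)|z_k|,R\}\}$. *)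

theory Defs
  imports "HOL-Analysis.Analysis"
begin

text \<open>Points of C^k are represented as functions nat => complex whose coordinates
  are z 1, ..., z k; all other coordinates are 0.\<close>
definition Ck :: "nat \<Rightarrow> (nat \<Rightarrow> complex) set" where
  "Ck k = {z. \<forall>i. i \<notin> {1..k} \<longrightarrow> z i = 0}"

definition midx :: "nat \<Rightarrow> nat \<Rightarrow> (nat \<Rightarrow> nat) set" where
  "midx k dt = {i. (\<forall>j. j \<notin> {2..k} \<longrightarrow> i j = 0) \<and> sum i {2..k} \<le> dt}"

definition pn :: "nat \<Rightarrow> nat \<Rightarrow> (nat \<Rightarrow> (nat \<Rightarrow> nat) \<Rightarrow> complex) \<Rightarrow> nat
    \<Rightarrow> (nat \<Rightarrow> complex) \<Rightarrow> complex" where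
  "pn k dt \<alpha> n z = (\<Sum>i\<in>midx k dt. \<alpha> n i * (\<Prod>j=2..k. z j ^ i j))"

definition last_deg :: "nat \<Rightarrow> nat \<Rightarrow> (nat \<Rightarrow> complex) \<Rightarrow> (nat \<Rightarrow> (nat \<Rightarrow> nat) \<Rightarrow> complex)
    \<Rightarrow> nat \<Rightarrow> nat" where
  "last_deg k dt a \<alpha> n =
     Max ((if a n \<noteq> 0 then {1} else {}) \<union>
          {sum i {2..k} | i. i \<in> midx k dt \<and> \<alpha> n i \<noteq> 0})"

definition unif_bdd_weak_shift_like ::
  "nat \<Rightarrow> nat \<Rightarrow> (nat \<Rightarrow> complex) \<Rightarrow> (nat \<Rightarrow> (nat \<Rightarrow> nat) \<Rightarrow> complex) \<Rightarrow> bool" where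
  "unif_bdd_weak_shift_like k dt a \<alpha> \<longleftrightarrow>
     1 \<le> dt \<and>
     (\<forall>n\<ge>1. last_deg k dt a \<alpha> n = dt) \<and>
     (\<exists>mt Mt :: real. 0 < mt \<and> 0 < Mt \<and>
        (\<forall>n\<ge>1. mt < cmod (a n) \<and> cmod (a n) < Mt \<and>
                 (\<forall>i\<in>midx k dt. cmod (\<alpha> n i) < Mt)))"

definition Sn :: "nat \<Rightarrow> nat \<Rightarrow> nat \<Rightarrow> (nat \<Rightarrow> complex) \<Rightarrow> (nat \<Rightarrow> (nat \<Rightarrow> nat) \<Rightarrow> complex)
    \<Rightarrow> nat \<Rightarrow> (nat \<Rightarrow> complex) \<Rightarrow> (nat \<Rightarrow> complex)" where
  "Sn k d dt a \<alpha> n z = (\<lambda>j.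
     if j \<in> {1..k-2} then z (j+1)
     else if j = k - 1 then z k + z 2 ^ (d - 1)
     else if j = k then a n * z 1 + pn k dt \<alpha> n z + (\<Sum>i=2..k. z i ^ d)
     else 0)"

primrec Scomp :: "nat \<Rightarrow> nat \<Rightarrow> nat \<Rightarrow> (nat \<Rightarrow> complex) \<Rightarrow> (nat \<Rightarrow> (nat \<Rightarrow> nat) \<Rightarrow> complex)
    \<Rightarrow> nat \<Rightarrow> (nat \<Rightarrow> complex) \<Rightarrow> (nat \<Rightarrow> complex)" where
  "Scomp k d dt a \<alpha> 0 = id"
| "Scomp k d dt a \<alpha> (Suc n) = Sn k d dt a \<alpha> (Suc n) \<circ> Scomp k d dt a \<alpha> n"

primrec Sinvcomp :: "nat \<Rightarrow> nat \<Rightarrow> nat \<Rightarrow> (nat \<Rightarrow> complex) \<Rightarrow> (nat \<Rightarrow> (nat \<Rightarrow> nat) \<Rightarrow> complex)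
    \<Rightarrow> nat \<Rightarrow> (nat \<Rightarrow> complex) \<Rightarrow> (nat \<Rightarrow> complex)" where
  "Sinvcomp k d dt a \<alpha> 0 = id"
| "Sinvcomp k d dt a \<alpha> (Suc n) =
     the_inv_into (Ck k) (Sn k d dt a \<alpha> (Suc n)) \<circ> Sinvcomp k d dt a \<alpha> n"

text \<open>Homogeneous coordinates: points of P^k are given by vectors with coordinates
  1..k+1; z in C^k is identified with [z:1].\<close>
definition hom1 :: "nat \<Rightarrow> (nat \<Rightarrow> complex) \<Rightarrow> (nat \<Rightarrow> complex)" where
  "hom1 k z = z(k+1 := 1)"

text \<open>Convergence [v n] -> [x] in P^k, via an affine chart {w_j \<noteq> 0} with x j \<noteq> 0.\<close>
definition proj_tendsto :: "nat \<Rightarrow> (nat \<Rightarrow> nat \<Rightarrow> complex) \<Rightarrow> (nat \<Rightarrow> complex) \<Rightarrow> bool" where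
  "proj_tendsto k v x \<longleftrightarrow>
     (\<exists>j\<in>{1..k+1}. x j \<noteq> 0 \<and> (\<forall>\<^sub>F n in sequentially. v n j \<noteq> 0) \<and>
        (\<forall>i\<in>{1..k+1}. (\<lambda>n. v n i / v n j) \<longlonglongrightarrow> x i / x j))"

definition Xplus :: "nat \<Rightarrow> nat \<Rightarrow> complex" where
  "Xplus k = (\<lambda>i. if i = k then 1 else 0)"

definition Xminus :: "nat \<Rightarrow> complex" where
  "Xminus = (\<lambda>i. if i = 1 then 1 else 0)"

definition Uplus :: "nat \<Rightarrow> nat \<Rightarrow> nat \<Rightarrow> (nat \<Rightarrow> complex) \<Rightarrow> (nat \<Rightarrow> (nat \<Rightarrow> nat) \<Rightarrow> complex)
    \<Rightarrow> (nat \<Rightarrow> complex) set" where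
  "Uplus k d dt a \<alpha> = {z \<in> Ck k.
     proj_tendsto k (\<lambda>n. hom1 k (Scomp k d dt a \<alpha> n z)) (Xplus k)}"

definition Uminus :: "nat \<Rightarrow> nat \<Rightarrow> nat \<Rightarrow> (nat \<Rightarrow> complex) \<Rightarrow> (nat \<Rightarrow> (nat \<Rightarrow> nat) \<Rightarrow> complex)
    \<Rightarrow> (nat \<Rightarrow> complex) set" where
  "Uminus k d dt a \<alpha> = {z \<in> Ck k.
     proj_tendsto k (\<lambda>n. hom1 k (Sinvcomp k d dt a \<alpha> n z)) Xminus}"

definition VRk :: "nat \<Rightarrow> real \<Rightarrow> (nat \<Rightarrow> complex) set" where
  "VRk k R = {z \<in> Ck k. (\<forall>j\<in>{1..k-1}. real (k-1) * cmod (z j) \<le> cmod (z k)) \<and> R \<le> cmod (z k)}"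

definition VRminus :: "nat \<Rightarrow> real \<Rightarrow> (nat \<Rightarrow> complex) set" where
  "VRminus k R = {z \<in> Ck k. (\<forall>j\<in>{2..k}. real (k-1) * cmod (z j) \<le> cmod (z 1)) \<and> R \<le> cmod (z 1)}"

text \<open>Interior taken in C^k (relative to the subspace Ck k of the product topology).\<close>
definition intCk :: "nat \<Rightarrow> (nat \<Rightarrow> complex) set \<Rightarrow> (nat \<Rightarrow> complex) set" where
  "intCk k V = (subtopology euclidean (Ck k)) interior_of V"

end

theory Submission
  imports Defs
begin

lemma Sn_low: "j \<in> {1..k-2} \<Longrightarrow> Sn k d dt a \<alpha> n z j = z (j+1)"
  unfolding Sn_def by simp
lemma Sn_km1: assumes "3 \<le> k" shows "Sn k d dt a \<alpha> n z (k-1) = z k + z 2 ^ (d-1)"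
proof -
  have "k - 1 \<notin> {1..k-2}" using assms by auto
  then show ?thesis unfolding Sn_def by (simp only: if_False if_True refl simp_thms)
qed
lemma Sn_k: assumes "3 \<le> k" shows "Sn k d dt a \<alpha> n z k = a n * z 1 + pn k dt \<alpha> n z + (\<Sum>i=2..k. z i ^ d)"
proof -
  have "k \<notin> {1..k-2}" "k \<noteq> k - 1" using assms by auto
  then show ?thesis unfolding Sn_def by (simp only: if_False if_True refl simp_thms)
qed

lemma Sn_Ck: assumes "3 \<le> k" shows "Sn k d dt a \<alpha> n z \<in> Ck k"
  using assms unfolding Ck_def Sn_def by auto

lemma Scomp_Ck: assumes "3 \<le> k" "z \<in> Ck k" shows "Scomp k d dt a \<alpha> n z \<in> Ck k"
  using assms by (induction n) (auto simp: Sn_Ck)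

lemma pn_cong: assumes "\<And>j. j \<in> {2..k} \<Longrightarrow> z j = w j"
  shows "pn k dt \<alpha> n z = pn k dt \<alpha> n w"
  unfolding pn_def using assms by (intro sum.cong refl arg_cong2[where f="(*)"] prod.cong) auto

definition zpre :: "nat \<Rightarrow> nat \<Rightarrow> (nat \<Rightarrow> complex) \<Rightarrow> (nat \<Rightarrow> complex)" where
  "zpre k d w = (\<lambda>j. if j \<in> {2..k-1} then w (j-1) else if j = k then w (k-1) - w 1 ^ (d-1) else 0)"

definition Sinv :: "nat \<Rightarrow> nat \<Rightarrow> nat \<Rightarrow> (nat \<Rightarrow> complex) \<Rightarrow> (nat \<Rightarrow> (nat \<Rightarrow> nat) \<Rightarrow> complex)
    \<Rightarrow> nat \<Rightarrow> (nat \<Rightarrow> complex) \<Rightarrow> (nat \<Rightarrow> complex)" where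
  "Sinv k d dt a \<alpha> n w = (\<lambda>j. if j = 1 then
      (w k - pn k dt \<alpha> n (zpre k d w) - (\<Sum>i=2..k. zpre k d w i ^ d)) / a n else zpre k d w j)"

lemma Sinv_Ck: assumes "3 \<le> k" shows "Sinv k d dt a \<alpha> n w \<in> Ck k"
  using assms unfolding Ck_def Sinv_def zpre_def by auto

lemma Sn_Sinv: assumes "3 \<le> k" "w \<in> Ck k" "a n \<noteq> 0"
  shows "Sn k d dt a \<alpha> n (Sinv k d dt a \<alpha> n w) = w"
proof
  fix j
  let ?z = "Sinv k d dt a \<alpha> n w"
  have agree: "\<And>i. i \<in> {2..k} \<Longrightarrow> ?z i = zpre k d w i" unfolding Sinv_def by auto
  have pe: "pn k dt \<alpha> n ?z = pn k dt \<alpha> n (zpre k d w)" by (rule pn_cong) (use agree in auto)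
  have se: "(\<Sum>i=2..k. ?z i ^ d) = (\<Sum>i=2..k. zpre k d w i ^ d)" using agree by simp
  have z1: "?z 1 = (w k - pn k dt \<alpha> n (zpre k d w) - (\<Sum>i=2..k. zpre k d w i ^ d)) / a n"
    unfolding Sinv_def by simp
  show "Sn k d dt a \<alpha> n ?z j = w j"
  proof (cases "j \<in> {1..k-2}")
    case True then show ?thesis using assms unfolding Sn_def Sinv_def zpre_def by auto
  next
    case F1: False
    show ?thesis
    proof (cases "j = k - 1")
      case True then show ?thesis using assms unfolding Sn_def Sinv_def zpre_def by auto
    next
      case F2: False
      show ?thesis
      proof (cases "j = k")
        case True then show ?thesis using assms F1 F2 pe se z1 unfolding Sn_def by auto
      next
        case False then show ?thesis using assms F1 F2 unfolding Sn_def Ck_def by auto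
      qed
    qed
  qed
qed

lemma Sn_inj: assumes "3 \<le> k" "a n \<noteq> 0" shows "inj_on (Sn k d dt a \<alpha> n) (Ck k)"
proof
  fix z w assume z: "z \<in> Ck k" and w: "w \<in> Ck k" and eq: "Sn k d dt a \<alpha> n z = Sn k d dt a \<alpha> n w"
  have e: "\<And>j. Sn k d dt a \<alpha> n z j = Sn k d dt a \<alpha> n w j" using eq by simp
  have mid: "z j = w j" if "j \<in> {2..k-1}" for j
    using e[of "j-1"] that assms unfolding Sn_def by (auto split: if_splits)
  have z2: "z 2 = w 2" using mid assms by auto
  have "k - 1 \<notin> {1..k-2}" "k - 1 \<noteq> k" using assms by auto
  then have zk: "z k = w k" using e[of "k-1"] assms z2 unfolding Sn_def by simp
  have ag: "z j = w j" if "j \<in> {2..k}" for j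
  proof (cases "j = k")
    case True then show ?thesis using zk by simp
  next
    case False then show ?thesis using mid that by auto
  qed
  have pe: "pn k dt \<alpha> n z = pn k dt \<alpha> n w" by (rule pn_cong) (use ag in auto)
  have se: "(\<Sum>i=2..k. z i ^ d) = (\<Sum>i=2..k. w i ^ d)" using ag by simp
  have "\<not> k \<le> k - 2" "k \<noteq> k - 1" using assms by auto
  then have "a n * z 1 = a n * w 1" using e[of k] assms pe se unfolding Sn_def by simp
  then have z1: "z 1 = w 1" using assms by simp
  show "z = w"
  proof
    fix j show "z j = w j"
    proof (cases "j \<in> {1..k}")
      case True
      then have "j = 1 \<or> j \<in> {2..k}" by auto
      then show ?thesis using z1 ag by auto
    next
      case False then show ?thesis using z w unfolding Ck_def by auto
    qed
  qed
qed

lemma inv_eq: assumes "3 \<le> k" "w \<in> Ck k" "a n \<noteq> 0"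
  shows "the_inv_into (Ck k) (Sn k d dt a \<alpha> n) w = Sinv k d dt a \<alpha> n w"
  using the_inv_into_f_eq[OF Sn_inj[of k a n d dt \<alpha>] Sn_Sinv[of k w a n d dt \<alpha>] Sinv_Ck[of k d dt a \<alpha> n w]] assms by blast

lemma hom1_app: "hom1 k z i = (if i = k + 1 then 1 else z i)"
  unfolding hom1_def by simp

lemma int_lemma:
  fixes K R :: real
  assumes "z \<in> Ck k" "finite J" "\<forall>j\<in>J. K * cmod (z j) < cmod (z c)" "R < cmod (z c)"
  shows "z \<in> intCk k {z \<in> Ck k. (\<forall>j\<in>J. K * cmod (z j) \<le> cmod (z c)) \<and> R \<le> cmod (z c)}"
proof -
  let ?U = "(\<Inter>j\<in>J. {w::nat\<Rightarrow>complex. K * cmod (w j) < cmod (w c)}) \<inter> {w. R < cmod (w c)}"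
  have cc: "continuous_on UNIV (\<lambda>w::nat\<Rightarrow>complex. cmod (w i))" for i
    by (intro continuous_intros) simp
  have o1: "open {w::nat\<Rightarrow>complex. K * cmod (w j) < cmod (w c)}" for j
    by (rule open_Collect_less) (intro continuous_intros cc)+
  have o2: "open {w::nat\<Rightarrow>complex. R < cmod (w c)}"
    by (rule open_Collect_less) (intro continuous_intros cc)+
  have oU: "open ?U" using o1 o2 assms(2) by (intro open_Int open_INT) auto
  have "openin (subtopology euclidean (Ck k)) (?U \<inter> Ck k)"
    using oU by (auto simp: openin_subtopology)
  moreover have "z \<in> ?U \<inter> Ck k" using assms by auto
  moreover have "?U \<inter> Ck k \<subseteq> {z \<in> Ck k. (\<forall>j\<in>J. K * cmod (z j) \<le> cmod (z c)) \<and> R \<le> cmod (z c)}"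
    by auto (meson less_le_not_le)
  ultimately show ?thesis unfolding intCk_def interior_of_def by blast
qed

lemma escape:
  fixes x :: "nat \<Rightarrow> nat \<Rightarrow> complex" and R B :: real
  assumes c: "c \<in> {1..k}" and R: "R > 0" and B: "B \<ge> 0"
    and lb: "\<And>m. R \<le> cmod (x m c)"
    and gr: "\<And>m. 2 * cmod (x m c) \<le> cmod (x (Suc m) c)"
    and rat: "\<And>m j. j \<in> {1..k} \<Longrightarrow> j \<noteq> c \<Longrightarrow>
        cmod (x (Suc m) j) \<le> B / cmod (x m c) * cmod (x (Suc m) c)"
  shows "proj_tendsto k (\<lambda>m. hom1 k (x m)) (\<lambda>i. if i = c then 1 else 0)"
proof -
  have grow: "2 ^ m * R \<le> cmod (x m c)" for m
  proof (induction m)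
    case 0 then show ?case using lb by simp
  next
    case (Suc m) then show ?case using gr[of m] by simp
  qed
  have pos: "cmod (x m c) > 0" for m using lb[of m] R by linarith
  have nz: "x m c \<noteq> 0" for m using pos[of m] by auto
  have ck: "c \<noteq> k + 1" using c by auto
  have geo: "(\<lambda>m. C * (1/2::real) ^ m) \<longlonglongrightarrow> 0" for C
    by (intro tendsto_mult_right_zero LIMSEQ_power_zero) simp
  have inv_le: "1 / cmod (x m c) \<le> (1/R) * (1/2) ^ m" for m
  proof -
    have "1 / cmod (x m c) \<le> 1 / (2 ^ m * R)"
      using grow[of m] R pos[of m] by (intro divide_left_mono) auto
    then show ?thesis by (simp add: power_one_over mult.commute)
  qed
  show ?thesis unfolding proj_tendsto_def
  proof (intro bexI[of _ c] conjI ballI)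
    show "(if c = c then 1 else 0) \<noteq> (0::complex)" by simp
    show "c \<in> {1..k+1}" using c by auto
    show "\<forall>\<^sub>F n in sequentially. hom1 k (x n) c \<noteq> 0" using nz ck by (simp add: hom1_app)
    fix i assume i: "i \<in> {1..k+1}"
    show "(\<lambda>n. hom1 k (x n) i / hom1 k (x n) c) \<longlonglongrightarrow>
          (if i = c then 1 else 0) / (if c = c then 1 else 0)"
    proof (cases "i = c")
      case True then show ?thesis using nz ck by (simp add: hom1_app)
    next
      case ic: False
      show ?thesis
      proof (cases "i = k + 1")
        case True
        have "(\<lambda>n. 1 / x n c) \<longlonglongrightarrow> 0"
        proof (rule Lim_null_comparison)
          show "\<forall>\<^sub>F n in sequentially. norm (1 / x n c) \<le> (1/R) * (1/2) ^ n"
            using inv_le by (simp add: norm_divide)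
        qed (rule geo)
        then show ?thesis using True ic ck by (simp add: hom1_app)
      next
        case False
        then have i2: "i \<in> {1..k}" "i \<noteq> c" using i ic by auto
        have "(\<lambda>n. x (Suc n) i / x (Suc n) c) \<longlonglongrightarrow> 0"
        proof (rule Lim_null_comparison)
          show "\<forall>\<^sub>F n in sequentially. norm (x (Suc n) i / x (Suc n) c) \<le> (B/R) * (1/2) ^ n"
          proof (intro always_eventually allI)
            fix n
            have "norm (x (Suc n) i / x (Suc n) c) = cmod (x (Suc n) i) / cmod (x (Suc n) c)"
              by (simp add: norm_divide)
            also have "\<dots> \<le> B / cmod (x n c)"
              using rat[OF i2] pos[of "Suc n"] by (simp add: divide_le_eq)
            also have "\<dots> = B * (1 / cmod (x n c))" by simp
            also have "\<dots> \<le> B * ((1/R) * (1/2) ^ n)" using B inv_le[of n] by (rule mult_left_mono[rotated])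
            finally show "norm (x (Suc n) i / x (Suc n) c) \<le> (B/R) * (1/2) ^ n" by simp
          qed
        qed (rule geo)
        then have "(\<lambda>n. x n i / x n c) \<longlonglongrightarrow> 0" by (rule LIMSEQ_imp_Suc)
        then show ?thesis using False ic ck by (simp add: hom1_app)
      qed
    qed
  qed
qed

lemma conv:
  fixes x :: "nat \<Rightarrow> nat \<Rightarrow> complex" and K R :: real
  assumes pt: "proj_tendsto k (\<lambda>m. hom1 k (x m)) (\<lambda>i. if i = c then 1 else 0)"
    and c: "c \<in> {1..k}" and K: "K \<ge> 0"
  shows "\<forall>\<^sub>F m in sequentially. (\<forall>j\<in>{1..k}-{c}. K * cmod (x m j) < cmod (x m c)) \<and> R < cmod (x m c)"
proof -
  have ck: "c \<noteq> k + 1" using c by auto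
  obtain j where j: "j \<in> {1..k+1}" "(if j = c then 1 else 0) \<noteq> (0::complex)"
    and ev: "\<forall>\<^sub>F n in sequentially. hom1 k (x n) j \<noteq> 0"
    and lim: "\<forall>i\<in>{1..k+1}. (\<lambda>n. hom1 k (x n) i / hom1 k (x n) j) \<longlonglongrightarrow>
         (if i = c then 1 else 0) / (if j = c then 1 else 0)"
    using pt unfolding proj_tendsto_def by blast
  have jc: "j = c" using j(2) by (auto split: if_splits)
  have nz: "\<forall>\<^sub>F n in sequentially. x n c \<noteq> 0" using ev jc ck by (simp add: hom1_app)
  have l1: "(\<lambda>n. 1 / x n c) \<longlonglongrightarrow> 0"
    using lim[rule_format, of "k+1"] jc ck by (simp add: hom1_app)
  have e1: "\<forall>\<^sub>F n in sequentially. norm (1 / x n c) < 1 / (\<bar>R\<bar> + 1)"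
    using tendstoD[OF l1, of "1 / (\<bar>R\<bar> + 1)"] by simp
  have l2: "(\<lambda>n. x n i / x n c) \<longlonglongrightarrow> 0" if "i \<in> {1..k}-{c}" for i
    using lim[rule_format, of i] that jc ck by (simp add: hom1_app)
  have e2: "\<forall>\<^sub>F n in sequentially. \<forall>i\<in>{1..k}-{c}. norm (x n i / x n c) < 1 / (K + 1)"
  proof (intro eventually_ball_finite ballI)
    fix i assume "i \<in> {1..k}-{c}"
    from tendstoD[OF l2[OF this], of "1/(K+1)"] K
    show "\<forall>\<^sub>F n in sequentially. norm (x n i / x n c) < 1 / (K + 1)" by simp
  qed simp
  show ?thesis
    using nz e1 e2
  proof eventually_elim
    case (elim n)
    then have p: "cmod (x n c) > 0" by simp
    have A: "\<forall>i\<in>{1..k}-{c}. K * cmod (x n i) < cmod (x n c)"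
    proof
      fix i assume "i \<in> {1..k}-{c}"
      then have "cmod (x n i) / cmod (x n c) < 1 / (K + 1)" using elim by (simp add: norm_divide)
      then have "(K + 1) * cmod (x n i) < cmod (x n c)" using p K by (simp add: field_simps)
      moreover have "K * cmod (x n i) \<le> (K + 1) * cmod (x n i)" by (simp add: mult_right_mono)
      ultimately show "K * cmod (x n i) < cmod (x n c)" by linarith
    qed
    have "1 / cmod (x n c) < 1 / (\<bar>R\<bar> + 1)" using elim by (simp add: norm_divide)
    then have "\<bar>R\<bar> + 1 < cmod (x n c)" using p by (simp add: field_simps)
    then show ?case using A by linarith
  qed
qed

lemma pn_bound:
  fixes s Mt :: real
  assumes zs: "\<And>j. j \<in> {2..k} \<Longrightarrow> cmod (z j) \<le> s" and s: "1 \<le> s"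
    and al: "\<And>i. i \<in> midx k dt \<Longrightarrow> cmod (\<alpha> n i) \<le> Mt"
  shows "cmod (pn k dt \<alpha> n z) \<le> real (card (midx k dt)) * Mt * s ^ dt"
proof -
  have trm: "cmod (\<alpha> n i * (\<Prod>j=2..k. z j ^ i j)) \<le> Mt * s ^ dt" if i: "i \<in> midx k dt" for i
  proof -
    have "cmod (\<Prod>j=2..k. z j ^ i j) = (\<Prod>j=2..k. cmod (z j) ^ i j)"
      by (simp add: prod_norm[symmetric] norm_power)
    also have "\<dots> \<le> (\<Prod>j=2..k. s ^ i j)"
      by (intro prod_mono conjI zero_le_power norm_ge_zero power_mono zs) auto
    also have "\<dots> = s ^ (\<Sum>j=2..k. i j)" by (simp add: power_sum)
    also have "\<dots> \<le> s ^ dt" using i s unfolding midx_def by (intro power_increasing) auto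
    finally have P: "cmod (\<Prod>j=2..k. z j ^ i j) \<le> s ^ dt" .
    have "cmod (\<alpha> n i * (\<Prod>j=2..k. z j ^ i j)) = cmod (\<alpha> n i) * cmod (\<Prod>j=2..k. z j ^ i j)"
      by (simp add: norm_mult)
    also have "\<dots> \<le> Mt * s ^ dt"
    proof -
      have "0 \<le> Mt" using al[OF i] norm_ge_zero[of "\<alpha> n i"] by linarith
      then show ?thesis using al[OF i] P by (intro mult_mono) auto
    qed
    finally show ?thesis .
  qed
  have "cmod (pn k dt \<alpha> n z) \<le> (\<Sum>i\<in>midx k dt. cmod (\<alpha> n i * (\<Prod>j=2..k. z j ^ i j)))"
    unfolding pn_def by (rule norm_sum)
  also have "\<dots> \<le> real (card (midx k dt)) * (Mt * s ^ dt)"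
    by (rule sum_bounded_above) (rule trm)
  finally show ?thesis by (simp add: mult.assoc)
qed

lemma fwd_est:
  fixes Mt C R r :: real
  assumes k: "3 \<le> k" and d: "dt + 2 \<le> d"
    and hz: "\<And>j. j \<in> {1..k-1} \<Longrightarrow> real (k-1) * cmod (z j) \<le> cmod (z k)"
    and r: "r = cmod (z k)" and rR: "R \<le> r" and R1: "1 \<le> R"
    and R3: "2 * real (k-1) * (Mt + C) \<le> R"
    and an: "cmod (a n) \<le> Mt"
    and al: "\<And>i. i \<in> midx k dt \<Longrightarrow> cmod (\<alpha> n i) \<le> Mt"
    and C: "C = real (card (midx k dt)) * Mt"
  shows "\<forall>j\<in>{1..k-1}. cmod (Sn k d dt a \<alpha> n z j) \<le> 2 * r ^ (d-1)"
    and "r ^ d / (2 * real (k-1)) \<le> cmod (Sn k d dt a \<alpha> n z k)"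
proof -
  define K where "K = real (k-1)"
  have K2: "K \<ge> 2" using k unfolding K_def by auto
  have r1: "1 \<le> r" using rR R1 by linarith
  have Mt0: "0 \<le> Mt" using an norm_ge_zero[of "a n"] by linarith
  have C0: "0 \<le> C" using C Mt0 by simp
  have d1: "d = Suc (d-1)" using d by auto
  have rd: "r ^ d = r * r ^ (d-1)" using d1 by (metis power_Suc)
  have rle: "r \<le> r ^ (d-1)" using power_increasing[of 1 "d-1" r] r1 d by simp
  have zj: "cmod (z j) \<le> r / K" if "j \<in> {1..k-1}" for j
    using hz[OF that] K2 r unfolding K_def[symmetric] by (simp add: field_simps)
  have zj': "cmod (z j) \<le> r" if "j \<in> {1..k-1}" for j
  proof -
    have "r / K \<le> r" using K2 r1 by (simp add: field_simps)
    then show ?thesis using zj[OF that] by linarith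
  qed
  have zall: "cmod (z j) \<le> r" if "j \<in> {2..k}" for j
    using that zj'[of j] r by (cases "j = k") auto
  show "\<forall>j\<in>{1..k-1}. cmod (Sn k d dt a \<alpha> n z j) \<le> 2 * r ^ (d-1)"
  proof
    fix j assume j: "j \<in> {1..k-1}"
    show "cmod (Sn k d dt a \<alpha> n z j) \<le> 2 * r ^ (d-1)"
    proof (cases "j \<in> {1..k-2}")
      case True
      then have "Sn k d dt a \<alpha> n z j = z (j+1)" by (rule Sn_low)
      moreover have "cmod (z (j+1)) \<le> r" using zall[of "j+1"] True k by auto
      ultimately show ?thesis using rle r1 by simp
    next
      case False
      then have jk: "j = k - 1" using j by auto
      have "Sn k d dt a \<alpha> n z j = z k + z 2 ^ (d-1)" using jk Sn_km1[OF k] by simp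
      moreover have "cmod (z k + z 2 ^ (d-1)) \<le> r + r ^ (d-1)"
      proof -
        have "cmod (z 2 ^ (d-1)) \<le> r ^ (d-1)"
          unfolding norm_power using zall[of 2] k by (intro power_mono) auto
        then show ?thesis using norm_triangle_ineq[of "z k" "z 2 ^ (d-1)"] r by linarith
      qed
      ultimately show ?thesis using rle by simp
    qed
  qed
  have Snk: "Sn k d dt a \<alpha> n z k = z k ^ d + ((\<Sum>i=2..k-1. z i ^ d) + a n * z 1 + pn k dt \<alpha> n z)"
  proof -
    have "Sn k d dt a \<alpha> n z k = a n * z 1 + pn k dt \<alpha> n z + (\<Sum>i=2..k. z i ^ d)"
      by (rule Sn_k[OF k])
    moreover have "(\<Sum>i=2..k. z i ^ d) = (\<Sum>i=2..k-1. z i ^ d) + z k ^ d"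
    proof -
      have "{2..k} = insert k {2..k-1}" using k by auto
      then show ?thesis using k by simp
    qed
    ultimately show ?thesis by (simp add: algebra_simps)
  qed
  have E1: "cmod (\<Sum>i=2..k-1. z i ^ d) \<le> (K - 1) / K * r ^ d"
  proof -
    have "cmod (\<Sum>i=2..k-1. z i ^ d) \<le> (\<Sum>i=2..k-1. cmod (z i ^ d))" by (rule norm_sum)
    also have "\<dots> \<le> (\<Sum>i=2..k-1. r / K * r ^ (d-1))"
    proof (rule sum_mono)
      fix i assume i: "i \<in> {2..k-1}"
      have "cmod (z i ^ d) = cmod (z i) * cmod (z i) ^ (d-1)" using d1 by (metis norm_power power_Suc)
      also have "\<dots> \<le> r / K * r ^ (d-1)"
        using zj[of i] zj'[of i] i K2 r1 by (intro mult_mono power_mono) auto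
      finally show "cmod (z i ^ d) \<le> r / K * r ^ (d-1)" .
    qed
    also have "\<dots> = (K - 1) / K * r ^ d"
    proof -
      have "real (card {2..k-1}) = K - 1" unfolding K_def using k by (simp add: of_nat_diff)
      then show ?thesis by (simp add: rd)
    qed
    finally show ?thesis .
  qed
  have E2: "cmod (a n * z 1) \<le> Mt * r ^ (d-1)"
  proof -
    have "cmod (z 1) \<le> r" using zj'[of 1] k by auto
    then have "cmod (z 1) \<le> r ^ (d-1)" using rle by linarith
    then show ?thesis unfolding norm_mult using an Mt0 by (intro mult_mono) auto
  qed
  have E3: "cmod (pn k dt \<alpha> n z) \<le> C * r ^ (d-1)"
  proof -
    have "cmod (pn k dt \<alpha> n z) \<le> real (card (midx k dt)) * Mt * r ^ dt"
      by (rule pn_bound[of k z r dt \<alpha> n Mt, OF zall r1 al])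
    also have "\<dots> \<le> C * r ^ (d-1)" unfolding C[symmetric]
      using C0 r1 d by (intro mult_left_mono power_increasing) auto
    finally show ?thesis .
  qed
  have E4: "(Mt + C) * r ^ (d-1) \<le> r ^ d / (2 * K)"
  proof -
    have "Mt + C \<le> r / (2 * K)" using R3 rR K2 unfolding K_def[symmetric] by (simp add: field_simps)
    then have "(Mt + C) * r ^ (d-1) \<le> r / (2 * K) * r ^ (d-1)" using r1 by (intro mult_right_mono) auto
    then show ?thesis by (simp add: rd)
  qed
  have "cmod (Sn k d dt a \<alpha> n z k) \<ge> cmod (z k ^ d) - cmod ((\<Sum>i=2..k-1. z i ^ d) + a n * z 1 + pn k dt \<alpha> n z)"
    unfolding Snk by (rule norm_diff_ineq)
  moreover have "cmod ((\<Sum>i=2..k-1. z i ^ d) + a n * z 1 + pn k dt \<alpha> n z)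
      \<le> cmod (\<Sum>i=2..k-1. z i ^ d) + cmod (a n * z 1) + cmod (pn k dt \<alpha> n z)"
    by (meson norm_triangle_le order_refl add_mono)
  moreover have "cmod (z k ^ d) = r ^ d" using r by (simp add: norm_power)
  moreover have "r ^ d - (K - 1) / K * r ^ d = r ^ d / K" using K2 by (simp add: field_simps)
  moreover have "r ^ d / K - r ^ d / (2 * K) = r ^ d / (2 * K)" using K2 by (simp add: field_simps)
  ultimately show "r ^ d / (2 * real (k-1)) \<le> cmod (Sn k d dt a \<alpha> n z k)"
    using E1 E2 E3 E4 unfolding K_def[symmetric] by (simp add: algebra_simps)
qed

lemma fwd_step:
  fixes Mt C R r :: real
  assumes k: "3 \<le> k" and d: "dt + 2 \<le> d"
    and hz: "\<And>j. j \<in> {1..k-1} \<Longrightarrow> real (k-1) * cmod (z j) \<le> cmod (z k)"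
    and r: "r = cmod (z k)" and rR: "R \<le> r" and R1: "1 \<le> R"
    and R3: "2 * real (k-1) * (Mt + C) \<le> R"
    and R4: "4 * real (k-1) ^ 2 \<le> R"
    and an: "cmod (a n) \<le> Mt"
    and al: "\<And>i. i \<in> midx k dt \<Longrightarrow> cmod (\<alpha> n i) \<le> Mt"
    and C: "C = real (card (midx k dt)) * Mt"
    and w: "w = Sn k d dt a \<alpha> n z"
  shows "\<forall>j\<in>{1..k-1}. real (k-1) * cmod (w j) \<le> cmod (w k)"
    and "2 * r \<le> cmod (w k)"
    and "\<forall>j\<in>{1..k-1}. cmod (w j) \<le> (4 * real (k-1)) / r * cmod (w k)"
proof -
  define K where "K = real (k-1)"
  have K2: "K \<ge> 2" using k unfolding K_def by auto
  have r1: "1 \<le> r" using rR R1 by linarith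
  have d1: "d = Suc (d-1)" using d by auto
  have rd: "r ^ d = r * r ^ (d-1)" using d1 by (metis power_Suc)
  have rle: "r \<le> r ^ (d-1)" using power_increasing[of 1 "d-1" r] r1 d by simp
  have e1: "\<forall>j\<in>{1..k-1}. cmod (w j) \<le> 2 * r ^ (d-1)"
    and e2: "r ^ d / (2 * K) \<le> cmod (w k)"
    using fwd_est[where k=k and z=z and d=d and dt=dt and r=r and R=R and Mt=Mt and C=C and a=a and n=n and \<alpha>=\<alpha>, OF k d hz r rR R1 R3 an al C] unfolding w K_def by auto
  have rK: "4 * K ^ 2 \<le> r" using R4 rR unfolding K_def by linarith
  have KK: "4 * K \<le> 4 * K ^ 2" using K2 by (simp add: power2_eq_square)
  have p0: "0 < r ^ (d-1)" using r1 by simp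
  show "\<forall>j\<in>{1..k-1}. real (k-1) * cmod (w j) \<le> cmod (w k)"
  proof
    fix j assume j: "j \<in> {1..k-1}"
    have "K * cmod (w j) \<le> K * (2 * r ^ (d-1))" using e1 j K2 by (intro mult_left_mono) auto
    also have "\<dots> \<le> r ^ d / (2 * K)"
    proof -
      have "4 * K ^ 2 * r ^ (d-1) \<le> r * r ^ (d-1)" using rK p0 by (intro mult_right_mono) auto
      then show ?thesis using K2 by (simp add: rd field_simps power2_eq_square)
    qed
    finally show "real (k-1) * cmod (w j) \<le> cmod (w k)" using e2 unfolding K_def by (rule order_trans)
  qed
  have "2 * r \<le> r ^ d / (2 * K)"
  proof -
    have "4 * K \<le> r ^ (d-1)" using KK rK rle by linarith
    then have "4 * K * r \<le> r ^ (d-1) * r" using r1 by (intro mult_right_mono) auto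
    then show ?thesis using K2 by (simp add: rd field_simps)
  qed
  then show "2 * r \<le> cmod (w k)" using e2 by linarith
  show "\<forall>j\<in>{1..k-1}. cmod (w j) \<le> (4 * real (k-1)) / r * cmod (w k)"
  proof
    fix j assume j: "j \<in> {1..k-1}"
    have "2 * r ^ (d-1) = (4 * K) / r * (r ^ d / (2 * K))" using K2 r1 by (simp add: rd field_simps)
    also have "\<dots> \<le> (4 * K) / r * cmod (w k)" using e2 K2 r1 by (intro mult_left_mono) auto
    finally show "cmod (w j) \<le> (4 * real (k-1)) / r * cmod (w k)" using e1 j unfolding K_def by fastforce
  qed
qed

lemma bwd_step:
  fixes Mt C R r :: real
  assumes k: "3 \<le> k" and d: "dt + 2 \<le> d" and dt1: "1 \<le> dt"
    and hz: "\<And>j. j \<in> {2..k} \<Longrightarrow> real (k-1) * cmod (z j) \<le> cmod (z 1)"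
    and r: "r = cmod (z 1)" and rR: "R \<le> r" and R2: "2 \<le> R"
    and R5: "2 * 4 ^ d * (real (k-1) + 1 + C) \<le> R"
    and R6: "real (k-1) * (2 * 4 ^ d * Mt) \<le> R"
    and R7: "2 * 4 ^ d * Mt \<le> R"
    and an: "cmod (a n) \<le> Mt" and an0: "0 < cmod (a n)"
    and al: "\<And>i. i \<in> midx k dt \<Longrightarrow> cmod (\<alpha> n i) \<le> Mt"
    and C: "C = real (card (midx k dt)) * Mt"
    and w: "w = Sinv k d dt a \<alpha> n z"
  shows "\<forall>j\<in>{2..k}. real (k-1) * cmod (w j) \<le> cmod (w 1)"
    and "2 * r \<le> cmod (w 1)"
    and "\<forall>j\<in>{2..k}. cmod (w j) \<le> (2 * 4 ^ d * Mt) / r * cmod (w 1)"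
proof -
  define K where "K = real (k-1)"
  define y where "y = zpre k d z"
  define s where "s = 2 * r ^ (d-1)"
  define B where "B = 2 * 4 ^ d * Mt"
  have K2: "K \<ge> 2" using k unfolding K_def by auto
  have r2: "2 \<le> r" using rR R2 by linarith
  have Mt0: "0 < Mt" using an an0 by linarith
  have C0: "0 \<le> C" using C Mt0 by simp
  have B0: "0 < B" using Mt0 unfolding B_def by simp
  have d1: "d = Suc (d-1)" using d by auto
  have rd: "r ^ d = r * r ^ (d-1)" using d1 by (metis power_Suc)
  have rle: "r \<le> r ^ (d-1)" using power_increasing[of 1 "d-1" r] r2 d by simp
  have r2le: "2 * r \<le> r ^ (d-1)"
  proof -
    have "d - 1 = Suc (d-2)" using d dt1 by auto
    then have "r ^ (d-1) = r * r ^ (d-2)" by (metis power_Suc)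
    moreover have "r \<le> r ^ (d-2)" using power_increasing[of 1 "d-2" r] r2 d dt1 by simp
    ultimately show ?thesis using r2 by (simp add: mult_right_mono)
  qed
  have zj: "cmod (z j) \<le> r" if "j \<in> {1..k-1}" for j
  proof (cases "j = 1")
    case True then show ?thesis using r by simp
  next
    case False
    then have "j \<in> {2..k}" using that by auto
    from hz[OF this] have "K * cmod (z j) \<le> r" unfolding K_def r .
    moreover have "cmod (z j) \<le> K * cmod (z j)" using mult_right_mono[of 1 K "cmod (z j)"] K2 by simp
    ultimately show ?thesis by linarith
  qed
  have zk: "cmod (z k) \<le> r"
  proof -
    from hz[of k] k have "K * cmod (z k) \<le> r" unfolding K_def r by auto
    moreover have "cmod (z k) \<le> K * cmod (z k)" using mult_right_mono[of 1 K "cmod (z k)"] K2 by simp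
    ultimately show ?thesis by linarith
  qed
  have wy: "w j = y j" if "j \<noteq> 1" for j using that unfolding w Sinv_def y_def by simp
  have w1: "a n * w 1 = z k - pn k dt \<alpha> n y - (\<Sum>i=2..k. y i ^ d)"
    using an0 unfolding w Sinv_def y_def by auto
  have ymid: "cmod (y j) \<le> r" if "j \<in> {2..k-1}" for j
  proof -
    have "y j = z (j-1)" using that unfolding y_def zpre_def by simp
    moreover have "j - 1 \<in> {1..k-1}" using that by auto
    ultimately show ?thesis using zj[of "j-1"] by simp
  qed
  have yk: "y k = z (k-1) - z 1 ^ (d-1)"
  proof -
    have e: "(k \<in> {2..k-1}) = False" using k by auto
    show ?thesis unfolding y_def zpre_def by (simp only: e if_False if_True refl simp_thms)
  qed
  have zk1: "cmod (z (k-1)) \<le> r" using zj[of "k-1"] k by auto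
  have z1p: "cmod (z 1 ^ (d-1)) = r ^ (d-1)" using r by (simp add: norm_power)
  have yk_up: "cmod (y k) \<le> s"
    using norm_triangle_ineq4[of "z (k-1)" "z 1 ^ (d-1)"] zk1 z1p rle unfolding yk s_def by linarith
  have yk_lo: "s / 4 \<le> cmod (y k)"
    using norm_triangle_ineq2[of "z 1 ^ (d-1)" "z (k-1)"] zk1 z1p r2le unfolding yk s_def
    by (simp add: norm_minus_commute)
  have rs: "r \<le> s" using rle r2 unfolding s_def by linarith
  have s1: "1 \<le> s" using rs r2 by linarith
  have yall: "cmod (y j) \<le> s" if "j \<in> {2..k}" for j
  proof (cases "j = k")
    case False
    then have "j \<in> {2..k-1}" using that by auto
    then show ?thesis using ymid[of j] rs by force
  qed (use yk_up in simp)
  have ss: "s \<le> s ^ (d-1)" using power_increasing[of 1 "d-1" s] s1 d by simp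
  have sd: "s ^ d = s * s ^ (d-1)" using d1 by (metis power_Suc)
  have rdle: "r ^ d \<le> s ^ (d-1)"
  proof -
    have dd: "d \<le> (d-1) * (d-1)"
    proof -
      have "2 * (d-1) \<le> (d-1) * (d-1)" using d dt1 by (intro mult_le_mono1) auto
      then show ?thesis using d by linarith
    qed
    have "r ^ d \<le> r ^ ((d-1) * (d-1))" using power_increasing[OF dd, of r] r2 by simp
    also have "\<dots> = (r ^ (d-1)) ^ (d-1)" by (simp add: power_mult)
    also have "\<dots> \<le> s ^ (d-1)" using r2 unfolding s_def by (intro power_mono) auto
    finally show ?thesis .
  qed
  have E1: "cmod (\<Sum>i=2..k-1. y i ^ d) \<le> K * s ^ (d-1)"
  proof -
    have "cmod (\<Sum>i=2..k-1. y i ^ d) \<le> (\<Sum>i=2..k-1. cmod (y i ^ d))" by (rule norm_sum)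
    also have "\<dots> \<le> (\<Sum>i=2..k-1. r ^ d)"
      by (rule sum_mono) (use ymid in \<open>auto simp: norm_power intro: power_mono\<close>)
    also have "\<dots> = real (k-2) * r ^ d" by (simp add: numeral_2_eq_2)
    also have "\<dots> \<le> K * s ^ (d-1)"
      using rdle r2 k unfolding K_def by (intro mult_mono) auto
    finally show ?thesis .
  qed
  have E2: "cmod (pn k dt \<alpha> n y) \<le> C * s ^ (d-1)"
  proof -
    have "cmod (pn k dt \<alpha> n y) \<le> real (card (midx k dt)) * Mt * s ^ dt"
      by (rule pn_bound[of k y s dt \<alpha> n Mt, OF yall s1 al])
    also have "\<dots> \<le> C * s ^ (d-1)" unfolding C[symmetric]
      using C0 s1 d by (intro mult_left_mono power_increasing) auto
    finally show ?thesis .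
  qed
  have E3: "cmod (z k) \<le> s ^ (d-1)" using zk rs ss by linarith
  have sum_split: "(\<Sum>i=2..k. y i ^ d) = (\<Sum>i=2..k-1. y i ^ d) + y k ^ d"
  proof -
    have "{2..k} = insert k {2..k-1}" using k by auto
    then show ?thesis using k by simp
  qed
  have aw: "a n * w 1 = - (y k ^ d) + (z k - pn k dt \<alpha> n y - (\<Sum>i=2..k-1. y i ^ d))"
    using w1 sum_split by (simp add: algebra_simps)
  have "cmod (y k ^ d) - cmod (z k - pn k dt \<alpha> n y - (\<Sum>i=2..k-1. y i ^ d)) \<le> cmod (a n * w 1)"
    unfolding aw using norm_diff_ineq[of "- (y k ^ d)" "z k - pn k dt \<alpha> n y - (\<Sum>i=2..k-1. y i ^ d)"] by simp
  moreover have "cmod (z k - pn k dt \<alpha> n y - (\<Sum>i=2..k-1. y i ^ d)) \<le> (K + 1 + C) * s ^ (d-1)"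
  proof -
    have "cmod (z k - pn k dt \<alpha> n y - (\<Sum>i=2..k-1. y i ^ d))
        \<le> cmod (z k) + cmod (pn k dt \<alpha> n y) + cmod (\<Sum>i=2..k-1. y i ^ d)"
      by (meson norm_triangle_ineq4 order_trans add_mono order_refl)
    then show ?thesis using E1 E2 E3 by (simp add: algebra_simps)
  qed
  moreover have "s ^ d / 4 ^ d \<le> cmod (y k ^ d)"
  proof -
    have "(s / 4) ^ d \<le> cmod (y k) ^ d" using yk_lo s1 by (intro power_mono) auto
    then show ?thesis by (simp add: norm_power power_divide)
  qed
  moreover have "(K + 1 + C) * s ^ (d-1) \<le> s ^ d / (2 * 4 ^ d)"
  proof -
    have "2 * 4 ^ d * (K + 1 + C) \<le> s" using R5 rR rs unfolding K_def by linarith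
    then have "2 * 4 ^ d * (K + 1 + C) * s ^ (d-1) \<le> s * s ^ (d-1)" using s1 by (intro mult_right_mono) auto
    then show ?thesis by (simp add: sd field_simps)
  qed
  moreover have "s ^ d / 4 ^ d - s ^ d / (2 * 4 ^ d) = s ^ d / (2 * 4 ^ d)" by (simp add: field_simps)
  ultimately have aw_lo: "s ^ d / (2 * 4 ^ d) \<le> cmod (a n) * cmod (w 1)" by (simp add: norm_mult)
  have w1_lo: "s ^ d / B \<le> cmod (w 1)"
  proof -
    have "cmod (a n) * cmod (w 1) \<le> Mt * cmod (w 1)" using an by (intro mult_right_mono) auto
    then have "s ^ d / (2 * 4 ^ d) \<le> Mt * cmod (w 1)" using aw_lo by linarith
    then show ?thesis using Mt0 unfolding B_def by (simp add: field_simps)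
  qed
  have sB: "B \<le> s ^ (d-1)" using R7 rR rs ss unfolding B_def by linarith
  have sKB: "K * B \<le> s ^ (d-1)" using R6 rR rs ss unfolding B_def K_def by linarith
  have s_le_w1: "s \<le> cmod (w 1)"
  proof -
    have "s * B \<le> s * s ^ (d-1)" using sB s1 by (intro mult_left_mono) auto
    then have "s \<le> s ^ d / B" using B0 by (simp add: sd field_simps)
    then show ?thesis using w1_lo by linarith
  qed
  have wjs: "cmod (w j) \<le> s" if "j \<in> {2..k}" for j using wy[of j] yall[OF that] that by auto
  show "\<forall>j\<in>{2..k}. real (k-1) * cmod (w j) \<le> cmod (w 1)"
  proof
    fix j assume j: "j \<in> {2..k}"
    have "K * cmod (w j) \<le> K * s" using wjs[OF j] K2 by (intro mult_left_mono) auto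
    also have "\<dots> \<le> s ^ d / B"
    proof -
      have "s * (K * B) \<le> s * s ^ (d-1)" using sKB s1 by (intro mult_left_mono) auto
      then show ?thesis using B0 by (simp add: sd field_simps)
    qed
    finally show "real (k-1) * cmod (w j) \<le> cmod (w 1)" using w1_lo unfolding K_def by (rule order_trans)
  qed
  show "2 * r \<le> cmod (w 1)" using s_le_w1 r2le rle r2 unfolding s_def by linarith
  show "\<forall>j\<in>{2..k}. cmod (w j) \<le> (2 * 4 ^ d * Mt) / r * cmod (w 1)"
  proof
    fix j assume j: "j \<in> {2..k}"
    have "s \<le> B / r * (s ^ d / B)"
    proof -
      have "s * r \<le> s * s ^ (d-1)" using rs ss s1 by (intro mult_left_mono) auto
      then show ?thesis using B0 r2 by (simp add: sd field_simps)
    qed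
    also have "\<dots> \<le> B / r * cmod (w 1)" using w1_lo B0 r2 by (intro mult_left_mono) auto
    finally show "cmod (w j) \<le> (2 * 4 ^ d * Mt) / r * cmod (w 1)" using wjs[OF j] unfolding B_def by linarith
  qed
qed

lemma pt_shift:
  assumes "proj_tendsto k (\<lambda>m. v (m + n)) x" shows "proj_tendsto k v x"
proof -
  obtain j where j: "j \<in> {1..k+1}" "x j \<noteq> 0" "\<forall>\<^sub>F m in sequentially. v (m + n) j \<noteq> 0"
    "\<forall>i\<in>{1..k+1}. (\<lambda>m. v (m + n) i / v (m + n) j) \<longlonglongrightarrow> x i / x j"
    using assms unfolding proj_tendsto_def by blast
  have "\<forall>\<^sub>F m in sequentially. v m j \<noteq> 0" using j(3) eventually_sequentially_seg[of "\<lambda>m. v m j \<noteq> 0" n] by simp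
  moreover have "\<forall>i\<in>{1..k+1}. (\<lambda>m. v m i / v m j) \<longlonglongrightarrow> x i / x j"
    using j(4) LIMSEQ_offset[of "\<lambda>m. v m _ / v m j" n] by blast
  ultimately show ?thesis unfolding proj_tendsto_def using j(1,2) by blast
qed

lemma Sinvcomp_facts:
  assumes k: "3 \<le> k" and z: "z \<in> Ck k" and a: "\<And>n. 1 \<le> n \<Longrightarrow> a n \<noteq> 0"
  shows "Sinvcomp k d dt a \<alpha> m z \<in> Ck k \<and>
    Sinvcomp k d dt a \<alpha> (Suc m) z = Sinv k d dt a \<alpha> (Suc m) (Sinvcomp k d dt a \<alpha> m z)"
proof (induction m)
  case 0
  then show ?case using z inv_eq[of k z a 1 d dt \<alpha>] k a[of 1] by simp
next
  case (Suc m)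
  then have c: "Sinvcomp k d dt a \<alpha> (Suc m) z \<in> Ck k" using Sinv_Ck[OF k] by simp
  then show ?case using inv_eq[of k _ a "Suc (Suc m)" d dt \<alpha>] k a[of "Suc (Suc m)"] by simp
qed

theorem lemma3p3:
  fixes k d dt :: nat and a :: "nat \<Rightarrow> complex" and \<alpha> :: "nat \<Rightarrow> (nat \<Rightarrow> nat) \<Rightarrow> complex"
  assumes "3 \<le> k"
    and "unif_bdd_weak_shift_like k dt a \<alpha>"
    and "dt + 2 \<le> d"
  shows "\<exists>R>1.
    Uplus k d dt a \<alpha> = (\<Union>n\<in>{1..}. {z \<in> Ck k. Scomp k d dt a \<alpha> n z \<in> intCk k (VRk k R)}) \<and>
    Uminus k d dt a \<alpha> = (\<Union>n\<in>{1..}. {z \<in> Ck k. Sinvcomp k d dt a \<alpha> n z \<in> intCk k (VRminus k R)})"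
proof -
  note k = assms(1) and d = assms(3)
  have dt1: "1 \<le> dt" using assms(2) unfolding unif_bdd_weak_shift_like_def by simp
  obtain mt Mt :: real where mt: "0 < mt" and Mt: "0 < Mt"
    and bnd: "\<And>n. 1 \<le> n \<Longrightarrow> mt < cmod (a n) \<and> cmod (a n) < Mt \<and> (\<forall>i\<in>midx k dt. cmod (\<alpha> n i) < Mt)"
    using assms(2) unfolding unif_bdd_weak_shift_like_def by blast
  have an: "cmod (a n) \<le> Mt" if "1 \<le> n" for n using bnd[OF that] by simp
  have an0: "0 < cmod (a n)" if "1 \<le> n" for n
  proof -
    from bnd[OF that] have "mt < cmod (a n)" by blast
    with mt show ?thesis by linarith
  qed
  have anz: "a n \<noteq> 0" if "1 \<le> n" for n using an0[OF that] by auto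
  have al: "\<And>i. i \<in> midx k dt \<Longrightarrow> cmod (\<alpha> n i) \<le> Mt" if "1 \<le> n" for n
    using bnd[OF that] by (simp add: less_imp_le)
  define C where "C = real (card (midx k dt)) * Mt"
  define K where "K = real (k-1)"
  have K2: "2 \<le> K" using k unfolding K_def by auto
  have C0: "0 \<le> C" using Mt unfolding C_def by simp
  define R where "R = 2 + 4 * K ^ 2 + 2 * K * (Mt + C) + 2 * 4 ^ d * (K + 1 + C)
     + K * (2 * 4 ^ d * Mt) + 2 * 4 ^ d * Mt"
  have t1: "0 \<le> 4 * K ^ 2" by simp
  have t2: "0 \<le> 2 * K * (Mt + C)" using K2 Mt C0 by simp
  have t3: "0 \<le> 2 * 4 ^ d * (K + 1 + C)" using K2 C0 by simp
  have t4: "0 \<le> K * (2 * 4 ^ d * Mt)" using K2 Mt by simp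
  have t5: "0 \<le> 2 * 4 ^ d * Mt" using Mt by simp
  have R2: "2 \<le> R" and R1: "1 \<le> R" and R3: "2 * real (k-1) * (Mt + C) \<le> R"
    and R4: "4 * real (k-1) ^ 2 \<le> R"
    and R5: "2 * 4 ^ d * (real (k-1) + 1 + C) \<le> R"
    and R6: "real (k-1) * (2 * 4 ^ d * Mt) \<le> R"
    and R7: "2 * 4 ^ d * Mt \<le> R"
    unfolding R_def K_def[symmetric] using t1 t2 t3 t4 t5 by linarith+
  have VRk_eq: "VRk k R = {z \<in> Ck k. (\<forall>j\<in>{1..k-1}. K * cmod (z j) \<le> cmod (z k)) \<and> R \<le> cmod (z k)}"
    unfolding VRk_def K_def ..
  have VRm_eq: "VRminus k R = {z \<in> Ck k. (\<forall>j\<in>{2..k}. K * cmod (z j) \<le> cmod (z 1)) \<and> R \<le> cmod (z 1)}"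
    unfolding VRminus_def K_def ..
  have Xp: "Xplus k = (\<lambda>i. if i = k then 1 else 0)" unfolding Xplus_def ..
  have Xm: "Xminus = (\<lambda>i. if i = 1 then 1 else 0)" unfolding Xminus_def ..
  have ck: "k \<in> {1..k}" "(1::nat) \<in> {1..k}" using k by auto
  have K0: "0 \<le> K" using K2 by simp
  
  have P1: "Uplus k d dt a \<alpha> = (\<Union>n\<in>{1..}. {z \<in> Ck k. Scomp k d dt a \<alpha> n z \<in> intCk k (VRk k R)})"
  proof (intro equalityI subsetI)
    fix z assume zU: "z \<in> Uplus k d dt a \<alpha>"
    then have z: "z \<in> Ck k" and pt: "proj_tendsto k (\<lambda>n. hom1 k (Scomp k d dt a \<alpha> n z)) (\<lambda>i. if i = k then 1 else 0)"
      unfolding Uplus_def Xp by auto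
    have ev: "\<forall>\<^sub>F m in sequentially. (\<forall>j\<in>{1..k}-{k}. K * cmod (Scomp k d dt a \<alpha> m z j) < cmod (Scomp k d dt a \<alpha> m z k))
       \<and> R < cmod (Scomp k d dt a \<alpha> m z k)"
      by (rule conv[OF pt ck(1) K0])
    then obtain N where N: "\<And>m. m \<ge> N \<Longrightarrow> (\<forall>j\<in>{1..k}-{k}. K * cmod (Scomp k d dt a \<alpha> m z j) < cmod (Scomp k d dt a \<alpha> m z k))
       \<and> R < cmod (Scomp k d dt a \<alpha> m z k)"
      unfolding eventually_sequentially by blast
    define m where "m = max N 1"
    have m: "m \<ge> N" "m \<in> {1..}" unfolding m_def by auto
    have "Scomp k d dt a \<alpha> m z \<in> intCk k (VRk k R)"
      unfolding VRk_eq
    proof (rule int_lemma)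
      show "Scomp k d dt a \<alpha> m z \<in> Ck k" by (rule Scomp_Ck[OF k z])
      have "{1..k-1} \<subseteq> {1..k}-{k}" by auto
      then show "\<forall>j\<in>{1..k-1}. K * cmod (Scomp k d dt a \<alpha> m z j) < cmod (Scomp k d dt a \<alpha> m z k)"
        using N[OF m(1)] by blast
      show "R < cmod (Scomp k d dt a \<alpha> m z k)" using N[OF m(1)] by auto
    qed simp
    then show "z \<in> (\<Union>n\<in>{1..}. {z \<in> Ck k. Scomp k d dt a \<alpha> n z \<in> intCk k (VRk k R)})"
      using m z by blast
  next
    fix z assume "z \<in> (\<Union>n\<in>{1..}. {z \<in> Ck k. Scomp k d dt a \<alpha> n z \<in> intCk k (VRk k R)})"
    then obtain n where n: "n \<in> {1..}" and zz: "z \<in> {z \<in> Ck k. Scomp k d dt a \<alpha> n z \<in> intCk k (VRk k R)}"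
      by (rule UN_E)
    have z: "z \<in> Ck k" and zi: "Scomp k d dt a \<alpha> n z \<in> intCk k (VRk k R)" using zz by simp_all
    have z0: "Scomp k d dt a \<alpha> n z \<in> VRk k R"
      using subsetD[OF interior_of_subset[of "subtopology euclidean (Ck k)" "VRk k R"] zi[unfolded intCk_def]] .
    define x where "x m = Scomp k d dt a \<alpha> (m + n) z" for m
    have xs: "x (Suc m) = Sn k d dt a \<alpha> (Suc (m + n)) (x m)" for m unfolding x_def by simp
    have inv: "x m \<in> VRk k R" for m
    proof (induction m)
      case 0 then show ?case using z0 unfolding x_def by simp
    next
      case (Suc m)
      then have h: "\<And>j. j \<in> {1..k-1} \<Longrightarrow> real (k-1) * cmod (x m j) \<le> cmod (x m k)" "R \<le> cmod (x m k)"
        unfolding VRk_def by auto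
      have sucn: "1 \<le> Suc (m + n)" by simp
      note fs = fwd_step[where k=k and z="x m" and d=d and dt=dt and r="cmod (x m k)" and R=R and Mt=Mt and C=C
          and a=a and n="Suc (m+n)" and \<alpha>=\<alpha> and w="x (Suc m)", OF k d h(1) refl h(2) R1 R3 R4 an[OF sucn] al[OF sucn] C_def xs]
      have "x (Suc m) \<in> Ck k" unfolding xs by (rule Sn_Ck[OF k])
      then show ?case using fs(1,2) h(2) R1 unfolding VRk_def by auto
    qed
    have "proj_tendsto k (\<lambda>m. hom1 k (x m)) (\<lambda>i. if i = k then 1 else 0)"
    proof (rule escape[OF ck(1), where R=R and B="4 * real (k-1)"])
      show "0 < R" using R1 by simp
      show "0 \<le> 4 * real (k-1)" by simp
      fix m
      have h: "\<And>j. j \<in> {1..k-1} \<Longrightarrow> real (k-1) * cmod (x m j) \<le> cmod (x m k)" "R \<le> cmod (x m k)"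
        using inv[of m] unfolding VRk_def by auto
      have sucn: "1 \<le> Suc (m + n)" by simp
      note fs = fwd_step[where k=k and z="x m" and d=d and dt=dt and r="cmod (x m k)" and R=R and Mt=Mt and C=C
          and a=a and n="Suc (m+n)" and \<alpha>=\<alpha> and w="x (Suc m)", OF k d h(1) refl h(2) R1 R3 R4 an[OF sucn] al[OF sucn] C_def xs]
      show "R \<le> cmod (x m k)" by (rule h(2))
      show "2 * cmod (x m k) \<le> cmod (x (Suc m) k)" by (rule fs(2))
      fix j assume "j \<in> {1..k}" "j \<noteq> k"
      then have "j \<in> {1..k-1}" by auto
      then show "cmod (x (Suc m) j) \<le> 4 * real (k-1) / cmod (x m k) * cmod (x (Suc m) k)" using fs(3) by blast
    qed
    then have "proj_tendsto k (\<lambda>m. hom1 k (Scomp k d dt a \<alpha> m z)) (Xplus k)"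
      unfolding Xp x_def by (rule pt_shift)
    then show "z \<in> Uplus k d dt a \<alpha>" unfolding Uplus_def using z by blast
  qed
  
  have P2: "Uminus k d dt a \<alpha> = (\<Union>n\<in>{1..}. {z \<in> Ck k. Sinvcomp k d dt a \<alpha> n z \<in> intCk k (VRminus k R)})"
  proof (intro equalityI subsetI)
    fix z assume zU: "z \<in> Uminus k d dt a \<alpha>"
    then have z: "z \<in> Ck k" and pt: "proj_tendsto k (\<lambda>n. hom1 k (Sinvcomp k d dt a \<alpha> n z)) (\<lambda>i. if i = 1 then 1 else 0)"
      unfolding Uminus_def Xm by auto
    have ev: "\<forall>\<^sub>F m in sequentially. (\<forall>j\<in>{1..k}-{1}. K * cmod (Sinvcomp k d dt a \<alpha> m z j) < cmod (Sinvcomp k d dt a \<alpha> m z 1))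
       \<and> R < cmod (Sinvcomp k d dt a \<alpha> m z 1)"
      by (rule conv[OF pt ck(2) K0])
    then obtain N where N: "\<And>m. m \<ge> N \<Longrightarrow> (\<forall>j\<in>{1..k}-{1}. K * cmod (Sinvcomp k d dt a \<alpha> m z j) < cmod (Sinvcomp k d dt a \<alpha> m z 1))
       \<and> R < cmod (Sinvcomp k d dt a \<alpha> m z 1)"
      unfolding eventually_sequentially by blast
    define m where "m = max N 1"
    have m: "m \<ge> N" "m \<in> {1..}" unfolding m_def by auto
    have "Sinvcomp k d dt a \<alpha> m z \<in> intCk k (VRminus k R)"
      unfolding VRm_eq
    proof (rule int_lemma)
      show "Sinvcomp k d dt a \<alpha> m z \<in> Ck k" using Sinvcomp_facts[where a=a and d=d and dt=dt and \<alpha>=\<alpha> and m=m, OF k z anz] by blast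
      have "{2..k} \<subseteq> {1..k}-{1}" by auto
      then show "\<forall>j\<in>{2..k}. K * cmod (Sinvcomp k d dt a \<alpha> m z j) < cmod (Sinvcomp k d dt a \<alpha> m z 1)"
        using N[OF m(1)] by blast
      show "R < cmod (Sinvcomp k d dt a \<alpha> m z 1)" using N[OF m(1)] by auto
    qed simp
    then show "z \<in> (\<Union>n\<in>{1..}. {z \<in> Ck k. Sinvcomp k d dt a \<alpha> n z \<in> intCk k (VRminus k R)})"
      using m z by blast
  next
    fix z assume "z \<in> (\<Union>n\<in>{1..}. {z \<in> Ck k. Sinvcomp k d dt a \<alpha> n z \<in> intCk k (VRminus k R)})"
    then obtain n where n: "n \<in> {1..}" and zz: "z \<in> {z \<in> Ck k. Sinvcomp k d dt a \<alpha> n z \<in> intCk k (VRminus k R)}"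
      by (rule UN_E)
    have z: "z \<in> Ck k" and zi: "Sinvcomp k d dt a \<alpha> n z \<in> intCk k (VRminus k R)" using zz by simp_all
    have z0: "Sinvcomp k d dt a \<alpha> n z \<in> VRminus k R"
      using subsetD[OF interior_of_subset[of "subtopology euclidean (Ck k)" "VRminus k R"] zi[unfolded intCk_def]] .
    define x where "x m = Sinvcomp k d dt a \<alpha> (m + n) z" for m
    have xs: "x (Suc m) = Sinv k d dt a \<alpha> (Suc (m + n)) (x m)" for m
      unfolding x_def using Sinvcomp_facts[where a=a and d=d and dt=dt and \<alpha>=\<alpha> and m="m+n", OF k z anz] by simp
    have inv: "x m \<in> VRminus k R" for m
    proof (induction m)
      case 0 then show ?case using z0 unfolding x_def by simp
    next
      case (Suc m)
      then have h: "\<And>j. j \<in> {2..k} \<Longrightarrow> real (k-1) * cmod (x m j) \<le> cmod (x m 1)" "R \<le> cmod (x m 1)"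
        unfolding VRminus_def by auto
      have sucn: "1 \<le> Suc (m + n)" by simp
      note fs = bwd_step[where k=k and z="x m" and d=d and dt=dt and r="cmod (x m 1)" and R=R and Mt=Mt and C=C
          and a=a and n="Suc (m+n)" and \<alpha>=\<alpha> and w="x (Suc m)", OF k d dt1 h(1) refl h(2) R2 R5 R6 R7 an[OF sucn] an0[OF sucn] al[OF sucn] C_def xs]
      have "x (Suc m) \<in> Ck k" unfolding xs by (rule Sinv_Ck[OF k])
      then show ?case using fs(1,2) h(2) R1 unfolding VRminus_def by auto
    qed
    have "proj_tendsto k (\<lambda>m. hom1 k (x m)) (\<lambda>i. if i = 1 then 1 else 0)"
    proof (rule escape[OF ck(2), where R=R and B="2 * 4 ^ d * Mt"])
      show "0 < R" using R1 by simp
      show "0 \<le> 2 * 4 ^ d * Mt" using Mt by simp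
      fix m
      have h: "\<And>j. j \<in> {2..k} \<Longrightarrow> real (k-1) * cmod (x m j) \<le> cmod (x m 1)" "R \<le> cmod (x m 1)"
        using inv[of m] unfolding VRminus_def by auto
      have sucn: "1 \<le> Suc (m + n)" by simp
      note fs = bwd_step[where k=k and z="x m" and d=d and dt=dt and r="cmod (x m 1)" and R=R and Mt=Mt and C=C
          and a=a and n="Suc (m+n)" and \<alpha>=\<alpha> and w="x (Suc m)", OF k d dt1 h(1) refl h(2) R2 R5 R6 R7 an[OF sucn] an0[OF sucn] al[OF sucn] C_def xs]
      show "R \<le> cmod (x m 1)" by (rule h(2))
      show "2 * cmod (x m 1) \<le> cmod (x (Suc m) 1)" by (rule fs(2))
      fix j assume "j \<in> {1..k}" "j \<noteq> 1"
      then have "j \<in> {2..k}" by auto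
      then show "cmod (x (Suc m) j) \<le> 2 * 4 ^ d * Mt / cmod (x m 1) * cmod (x (Suc m) 1)" using fs(3) by blast
    qed
    then have "proj_tendsto k (\<lambda>m. hom1 k (Sinvcomp k d dt a \<alpha> m z)) Xminus"
      unfolding Xm x_def by (rule pt_shift)
    then show "z \<in> Uminus k d dt a \<alpha>" unfolding Uminus_def using z by blast
  qed
  have "1 < R" using R2 by linarith
  then show ?thesis using P1 P2 by blast
qed

end
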